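(* Let $n\ge2$ and let $F_2$ be the uniform distribution on $[0,\frac2n]$ (cumulative distribution function $F_2(x)=\frac n2 x$ for $x\in[0,\frac2n]$, $F_2(x)=1$ for $x\in(\frac2n,1]$). Let $s(v)=\frac{81}{2}\cdot\frac{v}{2-3v}$ and let $h(x,y,z)=s(|x-y|+|y-z|+|z-x|)$, a probability density on $[0,\tfrac13]^3$. Define random numbers $b_1,\dots,b_n$ as follows. Case 1: $n=2m$ even. Draw $b_1$ from $F_2$ and set $b_i=b_1$ and $b_{m+i}=\frac2n-b_1$ for $i=1,\dots,m$. Case 2: $n=2m+1$ odd. Draw $b_1$ from $F_2$ and set $b_i=b_1$ and $b_{m-1+i}=\frac2n-b_1$ for $i=1,\dots,m-1$; independently draw $(x,y,z)$ with density $h$ and set $b_{2m-1}=\frac3n(x-y+\frac13)$, $b_{2m}=\frac3n(y-z+\frac13)$, $b_{2m+1}=\frac3n(z-x+\frac13)$. Then $\sum_{i=1}^n b_i=1$ and each $b_i$ has distribution $F_2$. *)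

theory Defs
  imports "HOL-Probability.Probability"
begin

definition F2 :: "nat \<Rightarrow> real measure" where
  "F2 n = uniform_measure lborel {0..2 / real n}"

definition s_fun :: "real \<Rightarrow> real" where
  "s_fun v = 81 / 2 * (v / (2 - 3 * v))"

definition h_dens :: "real \<Rightarrow> real \<Rightarrow> real \<Rightarrow> real" where
  "h_dens x y z =
     (if x \<in> {0..1/3} \<and> y \<in> {0..1/3} \<and> z \<in> {0..1/3}
      then s_fun (\<bar>x - y\<bar> + \<bar>y - z\<bar> + \<bar>z - x\<bar>) else 0)"

definition H_dist :: "(real \<times> real \<times> real) measure" where
  "H_dist = density lborel (\<lambda>(x, y, z). ennreal (h_dens x y z))"

text \<open>The construction of b_1..b_n from b_1 = t and (x,y,z), indices 1..n.\<close>
definition bseq :: "nat \<Rightarrow> real \<Rightarrow> real \<times> real \<times> real \<Rightarrow> nat \<Rightarrow> real" where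
  "bseq n t p i =
    (let m = n div 2; (x, y, z) = p in
     if even n then (if i \<le> m then t else 2 / real n - t)
     else if i \<le> m - 1 then t
     else if i \<le> 2 * m - 2 then 2 / real n - t
     else if i = 2 * m - 1 then 3 / real n * (x - y + 1/3)
     else if i = 2 * m then 3 / real n * (y - z + 1/3)
     else 3 / real n * (z - x + 1/3))"

end

theory Submission
  imports Defs
begin


lemma h_dens_meas[measurable]:
  assumes [measurable]: "f \<in> borel_measurable M" "g \<in> borel_measurable M" "k \<in> borel_measurable M"
  shows "(\<lambda>x. h_dens (f x) (g x) (k x)) \<in> borel_measurable M"
  unfolding h_dens_def s_fun_def by measurable

definition VV :: "real \<Rightarrow> real \<Rightarrow> real" where
  "VV d1 d2 = \<bar>d1\<bar> + \<bar>d2\<bar> + \<bar>d2 - d1\<bar>"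

lemma h_bound:
  fixes x y z :: real
  assumes "x \<in> {0..1/3}" "y \<in> {0..1/3}" "z \<in> {0..1/3}"
  shows "\<bar>x - y\<bar> + \<bar>y - z\<bar> + \<bar>z - x\<bar> \<le> 2/3"
  using assms by (auto split: abs_split)

lemma inner_b:
  "(\<integral>\<^sup>+b. ennreal (h_dens (b + d1) b (b + d2)) \<partial>lborel)
     = ennreal (if VV d1 d2 < 2/3 then 27/4 * VV d1 d2 else 0)"
proof (cases "VV d1 d2 < 2/3")
  case True
  define lo where "lo = max 0 (max (-d1) (-d2))"
  define hi where "hi = min (1/3) (min (1/3-d1) (1/3-d2))"
  have len: "hi - lo = 1/3 - VV d1 d2 / 2"
    unfolding lo_def hi_def VV_def by (auto split: abs_split simp: max_def min_def field_simps)
  have sv: "s_fun (VV d1 d2) * (1/3 - VV d1 d2 / 2) = 27/4 * VV d1 d2"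
    using True unfolding s_fun_def by (simp add: field_simps)
  have sv0: "s_fun (VV d1 d2) \<ge> 0"
    using True unfolding s_fun_def VV_def by (auto intro!: divide_nonneg_pos)
  have "\<And>b. h_dens (b + d1) b (b + d2) = s_fun (VV d1 d2) * indicator {lo..hi} b"
    unfolding h_dens_def lo_def hi_def VV_def
    by (auto simp: indicator_def abs_minus_commute)
  then have "(\<integral>\<^sup>+b. ennreal (h_dens (b + d1) b (b + d2)) \<partial>lborel)
      = (\<integral>\<^sup>+b. ennreal (s_fun (VV d1 d2)) * indicator {lo..hi} b \<partial>lborel)"
    using sv0 by (intro nn_integral_cong) (auto simp: indicator_def)
  also have "\<dots> = ennreal (s_fun (VV d1 d2)) * ennreal (hi - lo)"
    using len True by (simp add: nn_integral_cmult_indicator)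
  also have "\<dots> = ennreal (s_fun (VV d1 d2) * (1/3 - VV d1 d2 / 2))"
    using sv0 len True by (subst ennreal_mult) auto
  also have "\<dots> = ennreal (27/4 * VV d1 d2)"
    by (simp only: sv)
  finally show ?thesis using True by simp
next
  case False
  have "\<And>b. h_dens (b + d1) b (b + d2) = 0"
  proof -
    fix b
    show "h_dens (b + d1) b (b + d2) = 0"
    proof (cases "b + d1 \<in> {0..1/3} \<and> b \<in> {0..1/3} \<and> b + d2 \<in> {0..1/3}")
      case True
      from h_bound[of "b+d1" b "b+d2"] True False
      have "VV d1 d2 = 2/3" unfolding VV_def by (auto simp: abs_minus_commute)
      then have "\<bar>b + d1 - b\<bar> + \<bar>b - (b + d2)\<bar> + \<bar>b + d2 - (b + d1)\<bar> = 2/3"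
        unfolding VV_def by (simp add: abs_minus_commute)
      then show ?thesis using True unfolding h_dens_def s_fun_def by simp
    qed (auto simp: h_dens_def)
  qed
  then show ?thesis using False by simp
qed

lemma VV_ge: "VV d1 d2 \<ge> 2 * \<bar>d1\<bar>"
  unfolding VV_def by (auto split: abs_split)

lemma mid_d2:
  "(\<integral>\<^sup>+d2. ennreal (if VV d1 d2 < 2/3 then 27/4 * VV d1 d2 else 0) \<partial>lborel)
     = ennreal (3/2 * indicator {-1/3<..<1/3} d1)"
proof (cases "\<bar>d1\<bar> < 1/3")
  case False
  have "\<not> VV d1 d2 < 2/3" for d2 using VV_ge[of d1 d2] False by linarith
  then show ?thesis using False by (auto simp: indicator_def)
next
  case True
  define p where "p = max 0 d1"
  define q where "q = min 0 d1"
  define a where "a = p - 1/3"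
  define d where "d = q + 1/3"
  have pq: "p \<ge> 0" "q \<le> 0" "p - q = \<bar>d1\<bar>" "p * q = 0" "q \<le> p"
    unfolding p_def q_def by auto
  have aq: "a \<le> q" "p \<le> d" using True pq unfolding a_def d_def by auto
  let ?f1 = "\<lambda>x. ennreal (27/2*(p-x)) * indicator {a..q} x"
  let ?f2 = "\<lambda>x. ennreal (27/2*(p-q)) * indicator {q..p} x"
  let ?f3 = "\<lambda>x. ennreal (27/2*(x-q)) * indicator {p..d} x"
  have "AE x in lborel. ennreal (if VV d1 x < 2/3 then 27/4 * VV d1 x else 0) = ?f1 x + ?f2 x + ?f3 x"
    using AE_lborel_singleton[of a] AE_lborel_singleton[of q] AE_lborel_singleton[of p]
      AE_lborel_singleton[of d]
  proof eventually_elim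
    case (elim x)
    show ?case
      using elim True unfolding VV_def p_def q_def a_def d_def
      by (auto simp: indicator_def max_def min_def split: abs_split)
  qed
  then have "(\<integral>\<^sup>+d2. ennreal (if VV d1 d2 < 2/3 then 27/4 * VV d1 d2 else 0) \<partial>lborel)
     = (\<integral>\<^sup>+x. ?f1 x + ?f2 x + ?f3 x \<partial>lborel)"
    by (rule nn_integral_cong_AE)
  also have "\<dots> = (\<integral>\<^sup>+x. ?f1 x + ?f2 x \<partial>lborel) + (\<integral>\<^sup>+x. ?f3 x \<partial>lborel)"
    by (rule nn_integral_add) auto
  also have "(\<integral>\<^sup>+x. ?f1 x + ?f2 x \<partial>lborel) = (\<integral>\<^sup>+x. ?f1 x \<partial>lborel) + (\<integral>\<^sup>+x. ?f2 x \<partial>lborel)"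
    by (rule nn_integral_add) auto
  also have "(\<integral>\<^sup>+x. ?f1 x \<partial>lborel) = ennreal ((\<lambda>x. 27/2*(p*x - x^2/2)) q - (\<lambda>x. 27/2*(p*x - x^2/2)) a)"
    using aq pq by (intro nn_integral_FTC_Icc) (auto intro!: derivative_eq_intros simp: field_simps)
  also have "(\<integral>\<^sup>+x. ?f2 x \<partial>lborel) = ennreal ((\<lambda>x. 27/2*(p-q)*x) p - (\<lambda>x. 27/2*(p-q)*x) q)"
    using aq pq by (intro nn_integral_FTC_Icc) (auto intro!: derivative_eq_intros simp: field_simps)
  also have "(\<integral>\<^sup>+x. ?f3 x \<partial>lborel) = ennreal ((\<lambda>x. 27/2*(x^2/2 - q*x)) d - (\<lambda>x. 27/2*(x^2/2 - q*x)) p)"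
    using aq pq by (intro nn_integral_FTC_Icc) (auto intro!: derivative_eq_intros simp: field_simps)
  finally have eq: "(\<integral>\<^sup>+d2. ennreal (if VV d1 d2 < 2/3 then 27/4 * VV d1 d2 else 0) \<partial>lborel)
     = ennreal (27/2*(p*q - q^2/2) - 27/2*(p*a - a^2/2)) + ennreal (27/2*(p-q)*p - 27/2*(p-q)*q)
       + ennreal (27/2*(d^2/2 - q*d) - 27/2*(p^2/2 - q*p))" .
  have x1: "27/2*(p*q - q^2/2) - 27/2*(p*a - a^2/2) = 27/2*((q-a)*(p-(q+a)/2))"
    by (simp add: field_simps power2_eq_square)
  have x3: "27/2*(d^2/2 - q*d) - 27/2*(p^2/2 - q*p) = 27/2*((d-p)*((d+p)/2 - q))"
    by (simp add: field_simps power2_eq_square)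
  have n1: "27/2*(p*q - q^2/2) - 27/2*(p*a - a^2/2) \<ge> 0"
    unfolding x1 using aq pq by (intro mult_nonneg_nonneg) auto
  have n3: "27/2*(d^2/2 - q*d) - 27/2*(p^2/2 - q*p) \<ge> 0"
    unfolding x3 using aq pq by (intro mult_nonneg_nonneg) auto
  have n2: "27/2*(p-q)*p - 27/2*(p-q)*q \<ge> 0"
    using pq by (simp add: algebra_simps)
  have sum: "(27/2*(p*q - q^2/2) - 27/2*(p*a - a^2/2)) + (27/2*(p-q)*p - 27/2*(p-q)*q)
       + (27/2*(d^2/2 - q*d) - 27/2*(p^2/2 - q*p)) = 3/2"
  proof (cases "d1 \<ge> 0")
    case True
    then have "p = d1" "q = 0" unfolding p_def q_def by auto
    then show ?thesis unfolding a_def d_def by (simp add: field_simps power2_eq_square)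
  next
    case False
    then have "p = 0" "q = d1" unfolding p_def q_def by auto
    then show ?thesis unfolding a_def d_def by (simp add: field_simps power2_eq_square)
  qed
  define X1 where "X1 = 27/2*(p*q - q^2/2) - 27/2*(p*a - a^2/2)"
  define X2 where "X2 = 27/2*(p-q)*p - 27/2*(p-q)*q"
  define X3 where "X3 = 27/2*(d^2/2 - q*d) - 27/2*(p^2/2 - q*p)"
  have "ennreal X1 + ennreal X2 + ennreal X3 = ennreal (X1 + X2) + ennreal X3"
    using n1 n2 unfolding X1_def X2_def by (subst ennreal_plus) auto
  also have "\<dots> = ennreal (X1 + X2 + X3)"
    using n1 n2 n3 unfolding X1_def X2_def X3_def by (subst (2) ennreal_plus) auto
  also have "X1 + X2 + X3 = 3/2 * indicator {-1/3<..<1/3} d1"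
    using sum True unfolding X1_def X2_def X3_def by (auto simp: indicator_def)
  finally show ?thesis unfolding eq X1_def X2_def X3_def .
qed

lemma marg_iter:
  assumes [measurable]: "G \<in> borel_measurable borel"
  shows "(\<integral>\<^sup>+a. \<integral>\<^sup>+b. \<integral>\<^sup>+c. G (a - b) * ennreal (h_dens a b c) \<partial>lborel \<partial>lborel \<partial>lborel)
       = (\<integral>\<^sup>+u. G u * ennreal (3/2 * indicator {-1/3<..<1/3} u) \<partial>lborel)"
proof -
  have "(\<integral>\<^sup>+a. \<integral>\<^sup>+b. \<integral>\<^sup>+c. G (a - b) * ennreal (h_dens a b c) \<partial>lborel \<partial>lborel \<partial>lborel)
      = (\<integral>\<^sup>+b. \<integral>\<^sup>+a. \<integral>\<^sup>+c. G (a - b) * ennreal (h_dens a b c) \<partial>lborel \<partial>lborel \<partial>lborel)"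
    by (rule lborel_pair.Fubini'[symmetric]) measurable
  also have "\<dots> = (\<integral>\<^sup>+b. \<integral>\<^sup>+d1. \<integral>\<^sup>+d2. G d1 * ennreal (h_dens (b + d1) b (b + d2)) \<partial>lborel \<partial>lborel \<partial>lborel)"
  proof (rule nn_integral_cong)
    fix b :: real
    have "(\<integral>\<^sup>+a. \<integral>\<^sup>+c. G (a - b) * ennreal (h_dens a b c) \<partial>lborel \<partial>lborel)
        = (\<integral>\<^sup>+d1. \<integral>\<^sup>+c. G (b + 1 * d1 - b) * ennreal (h_dens (b + 1 * d1) b c) \<partial>lborel \<partial>lborel)"
    proof -
      have m: "(\<lambda>a. \<integral>\<^sup>+c. G (a - b) * ennreal (h_dens a b c) \<partial>lborel) \<in> borel_measurable borel"
        by measurable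
      show ?thesis using nn_integral_real_affine[OF m, of 1 b] by simp
    qed
    also have "\<dots> = (\<integral>\<^sup>+d1. \<integral>\<^sup>+d2. G d1 * ennreal (h_dens (b + d1) b (b + d2)) \<partial>lborel \<partial>lborel)"
    proof (rule nn_integral_cong)
      fix d1 :: real
      show "(\<integral>\<^sup>+c. G (b + 1 * d1 - b) * ennreal (h_dens (b + 1 * d1) b c) \<partial>lborel)
          = (\<integral>\<^sup>+d2. G d1 * ennreal (h_dens (b + d1) b (b + d2)) \<partial>lborel)"
      proof -
        have m: "(\<lambda>c. G (b + 1 * d1 - b) * ennreal (h_dens (b + 1 * d1) b c)) \<in> borel_measurable borel"
          by measurable
        show ?thesis using nn_integral_real_affine[OF m, of 1 b] by simp
      qed
    qed
    finally show "(\<integral>\<^sup>+a. \<integral>\<^sup>+c. G (a - b) * ennreal (h_dens a b c) \<partial>lborel \<partial>lborel)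
        = (\<integral>\<^sup>+d1. \<integral>\<^sup>+d2. G d1 * ennreal (h_dens (b + d1) b (b + d2)) \<partial>lborel \<partial>lborel)" .
  qed
  also have "\<dots> = (\<integral>\<^sup>+d1. \<integral>\<^sup>+b. \<integral>\<^sup>+d2. G d1 * ennreal (h_dens (b + d1) b (b + d2)) \<partial>lborel \<partial>lborel \<partial>lborel)"
    by (rule lborel_pair.Fubini') measurable
  also have "\<dots> = (\<integral>\<^sup>+d1. \<integral>\<^sup>+d2. \<integral>\<^sup>+b. G d1 * ennreal (h_dens (b + d1) b (b + d2)) \<partial>lborel \<partial>lborel \<partial>lborel)"
    by (rule nn_integral_cong, rule lborel_pair.Fubini') measurable
  also have "\<dots> = (\<integral>\<^sup>+d1. G d1 * \<integral>\<^sup>+d2. \<integral>\<^sup>+b. ennreal (h_dens (b + d1) b (b + d2)) \<partial>lborel \<partial>lborel \<partial>lborel)"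
    by (rule nn_integral_cong, subst nn_integral_cmult[symmetric], measurable,
        rule nn_integral_cong, subst nn_integral_cmult[symmetric], measurable)
  also have "\<dots> = (\<integral>\<^sup>+u. G u * ennreal (3/2 * indicator {-1/3<..<1/3} u) \<partial>lborel)"
    by (simp only: inner_b mid_d2)
  finally show ?thesis .
qed

lemma pair_iter:
  fixes F :: "real \<times> 'b::euclidean_space \<Rightarrow> ennreal"
  assumes [measurable]: "F \<in> borel_measurable borel"
  shows "integral\<^sup>N lborel F = (\<integral>\<^sup>+x. \<integral>\<^sup>+y. F (x, y) \<partial>lborel \<partial>lborel)"
proof -
  have "integral\<^sup>N lborel F = integral\<^sup>N (lborel \<Otimes>\<^sub>M lborel) F"
    by (simp only: lborel_prod)
  also have "\<dots> = (\<integral>\<^sup>+x. \<integral>\<^sup>+y. F (x, y) \<partial>lborel \<partial>lborel)"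
    by (rule lborel.nn_integral_fst[symmetric]) (simp add: lborel_prod)
  finally show ?thesis .
qed

lemma triple_iter:
  fixes F :: "real \<times> real \<times> real \<Rightarrow> ennreal"
  assumes [measurable]: "F \<in> borel_measurable borel"
  shows "integral\<^sup>N lborel F = (\<integral>\<^sup>+x. \<integral>\<^sup>+y. \<integral>\<^sup>+z. F (x, y, z) \<partial>lborel \<partial>lborel \<partial>lborel)"
  by (subst pair_iter, simp, rule nn_integral_cong, subst pair_iter) auto

lemma triple_meas:
  fixes f :: "real \<times> real \<times> real \<Rightarrow> ennreal"
  shows "f \<in> borel_measurable (borel \<Otimes>\<^sub>M (borel \<Otimes>\<^sub>M borel)) \<Longrightarrow> f \<in> borel_measurable borel"
  by (simp add: borel_prod)

lemma h_cyc: "h_dens x y z = h_dens y z x"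
  unfolding h_dens_def by (auto simp: add_ac)

definition RG :: "(real \<Rightarrow> ennreal) \<Rightarrow> ennreal" where
  "RG G = (\<integral>\<^sup>+u. G u * ennreal (3/2 * indicator {-1/3<..<1/3} u) \<partial>lborel)"

lemma marg1:
  assumes [measurable]: "G \<in> borel_measurable borel"
  shows "(\<integral>\<^sup>+p. (case p of (x, y, z) \<Rightarrow> G (x - y) * ennreal (h_dens x y z)) \<partial>lborel) = RG G"
proof -
  have m: "(\<lambda>(x, y, z). G (x - y) * ennreal (h_dens x y z)) \<in> borel_measurable borel"
    by (rule triple_meas) measurable
  show ?thesis unfolding RG_def by (subst triple_iter[OF m]) (simp add: marg_iter)
qed

lemma marg2:
  assumes [measurable]: "G \<in> borel_measurable borel"
  shows "(\<integral>\<^sup>+p. (case p of (x, y, z) \<Rightarrow> G (y - z) * ennreal (h_dens x y z)) \<partial>lborel) = RG G"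
proof -
  have "(\<integral>\<^sup>+p. (case p of (x, y, z) \<Rightarrow> G (y - z) * ennreal (h_dens x y z)) \<partial>lborel)
     = (\<integral>\<^sup>+x. \<integral>\<^sup>+y. \<integral>\<^sup>+z. G (y - z) * ennreal (h_dens x y z) \<partial>lborel \<partial>lborel \<partial>lborel)"
  proof -
    have m: "(\<lambda>(x, y, z). G (y - z) * ennreal (h_dens x y z)) \<in> borel_measurable borel"
      by (rule triple_meas) measurable
    show ?thesis by (subst triple_iter[OF m]) simp
  qed
  also have "\<dots> = (\<integral>\<^sup>+y. \<integral>\<^sup>+x. \<integral>\<^sup>+z. G (y - z) * ennreal (h_dens x y z) \<partial>lborel \<partial>lborel \<partial>lborel)"
    by (rule lborel_pair.Fubini'[symmetric]) measurable
  also have "\<dots> = (\<integral>\<^sup>+y. \<integral>\<^sup>+z. \<integral>\<^sup>+x. G (y - z) * ennreal (h_dens x y z) \<partial>lborel \<partial>lborel \<partial>lborel)"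
    by (rule nn_integral_cong, rule lborel_pair.Fubini'[symmetric]) measurable
  also have "\<dots> = (\<integral>\<^sup>+y. \<integral>\<^sup>+z. \<integral>\<^sup>+x. G (y - z) * ennreal (h_dens y z x) \<partial>lborel \<partial>lborel \<partial>lborel)"
    by (simp only: h_cyc[of _ "_::real"])
  also have "\<dots> = RG G" unfolding RG_def by (rule marg_iter) simp
  finally show ?thesis .
qed

lemma marg3:
  assumes [measurable]: "G \<in> borel_measurable borel"
  shows "(\<integral>\<^sup>+p. (case p of (x, y, z) \<Rightarrow> G (z - x) * ennreal (h_dens x y z)) \<partial>lborel) = RG G"
proof -
  have "(\<integral>\<^sup>+p. (case p of (x, y, z) \<Rightarrow> G (z - x) * ennreal (h_dens x y z)) \<partial>lborel)
     = (\<integral>\<^sup>+x. \<integral>\<^sup>+y. \<integral>\<^sup>+z. G (z - x) * ennreal (h_dens x y z) \<partial>lborel \<partial>lborel \<partial>lborel)"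
  proof -
    have m: "(\<lambda>(x, y, z). G (z - x) * ennreal (h_dens x y z)) \<in> borel_measurable borel"
      by (rule triple_meas) measurable
    show ?thesis by (subst triple_iter[OF m]) simp
  qed
  also have "\<dots> = (\<integral>\<^sup>+x. \<integral>\<^sup>+z. \<integral>\<^sup>+y. G (z - x) * ennreal (h_dens x y z) \<partial>lborel \<partial>lborel \<partial>lborel)"
    by (rule nn_integral_cong, rule lborel_pair.Fubini'[symmetric]) measurable
  also have "\<dots> = (\<integral>\<^sup>+z. \<integral>\<^sup>+x. \<integral>\<^sup>+y. G (z - x) * ennreal (h_dens x y z) \<partial>lborel \<partial>lborel \<partial>lborel)"
    by (rule lborel_pair.Fubini'[symmetric]) measurable
  also have "\<dots> = (\<integral>\<^sup>+z. \<integral>\<^sup>+x. \<integral>\<^sup>+y. G (z - x) * ennreal (h_dens z x y) \<partial>lborel \<partial>lborel \<partial>lborel)"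
    by (intro nn_integral_cong) (metis h_cyc)
  also have "\<dots> = RG G" unfolding RG_def by (rule marg_iter) simp
  finally show ?thesis .
qed



lemma aff_iff:
  fixes n :: real assumes "n > 0"
  shows "(1/n + 3/n*u \<in> {0..2/n}) \<longleftrightarrow> u \<in> {-1/3..1/3}"
proof -
  have "1/n + 3/n*u = (1 + 3*u)/n" using assms by (simp add: field_simps)
  then show ?thesis using assms by (auto simp: field_simps)
qed

lemma RG_F2:
  assumes n: "n > 0" and A[measurable]: "A \<in> sets borel"
  shows "RG (\<lambda>u. indicator A (3/real n*(u+1/3))) = emeasure (F2 n) A"
proof -
  have rn: "real n > 0" using n by simp
  define J where "J = (\<integral>\<^sup>+u. indicator A (3/real n*(u+1/3)) * indicator {-1/3<..<1/3} u \<partial>lborel)"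
  have "emeasure (F2 n) A = emeasure lborel ({0..2/real n} \<inter> A) / emeasure lborel {0..2/real n}"
    unfolding F2_def by (subst emeasure_uniform_measure) auto
  also have "emeasure lborel ({0..2/real n} \<inter> A) = (\<integral>\<^sup>+t. indicator ({0..2/real n} \<inter> A) t \<partial>lborel)"
    by simp
  also have "\<dots> = ennreal (3/real n) * (\<integral>\<^sup>+u. indicator ({0..2/real n} \<inter> A) (1/real n + 3/real n * u) \<partial>lborel)"
    using nn_integral_real_affine[of "indicator ({0..2/real n} \<inter> A)" "3/real n" "1/real n"] rn
    by simp
  also have "(\<integral>\<^sup>+u. indicator ({0..2/real n} \<inter> A) (1/real n + 3/real n * u) \<partial>lborel) = J"
    unfolding J_def
  proof (rule nn_integral_cong_AE)
    show "AE u in lborel. indicator ({0..2/real n} \<inter> A) (1/real n + 3/real n * u) =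
        (indicator A (3/real n*(u+1/3)) * indicator {-1/3<..<1/3} u :: ennreal)"
      using AE_lborel_singleton[of "1/3"] AE_lborel_singleton[of "-1/3"]
    proof eventually_elim
      case (elim u)
      have e: "3/real n*(u+1/3) = 1/real n + 3/real n * u" using rn by (simp add: field_simps)
      show ?case using aff_iff[OF rn, of u] elim unfolding e
        by (auto simp: indicator_def)
    qed
  qed
  also have "emeasure lborel {0..2/real n} = ennreal (2/real n)" using rn by simp
  also have "RG (\<lambda>u. indicator A (3/real n*(u+1/3))) = ennreal (3/2) * J"
    unfolding RG_def J_def
    by (subst nn_integral_cmult[symmetric]) (measurable, auto intro!: nn_integral_cong simp: indicator_def)
  moreover have "ennreal (3/real n) * J / ennreal (2/real n) = ennreal (3/2) * J"
  proof -
    have "ennreal (3/real n) * J / ennreal (2/real n) = J * (ennreal (3/real n) / ennreal (2/real n))"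
      by (simp add: ennreal_times_divide mult.commute)
    also have "ennreal (3/real n) / ennreal (2/real n) = ennreal (3/2)"
      using rn by (subst divide_ennreal) (auto simp: field_simps)
    finally show ?thesis by (simp add: mult.commute)
  qed
  ultimately show ?thesis by simp
qed

lemma triple_meas_r:
  fixes f :: "real \<times> real \<times> real \<Rightarrow> real"
  shows "f \<in> borel_measurable (borel \<Otimes>\<^sub>M (borel \<Otimes>\<^sub>M borel)) \<Longrightarrow> f \<in> borel_measurable borel"
  by (simp add: borel_prod)

lemma H_marg_gen:
  assumes n: "n > 0" and D[measurable]: "D \<in> borel_measurable borel"
    and marg: "\<And>G. G \<in> borel_measurable borel \<Longrightarrow>
      (\<integral>\<^sup>+p. (case p of (x, y, z) \<Rightarrow> G (D (x, y, z)) * ennreal (h_dens x y z)) \<partial>lborel) = RG G"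
  shows "distr H_dist borel (\<lambda>p. 3/real n * (D p + 1/3)) = F2 n"
proof (rule measure_eqI)
  show "sets (distr H_dist borel (\<lambda>p. 3/real n * (D p + 1/3))) = sets (F2 n)"
    by (simp add: F2_def)
next
  fix A assume "A \<in> sets (distr H_dist borel (\<lambda>p. 3/real n * (D p + 1/3)))"
  then have A[measurable]: "A \<in> sets borel" by simp
  have hm: "(\<lambda>(x, y, z). ennreal (h_dens x y z)) \<in> borel_measurable (lborel :: (real \<times> real \<times> real) measure)"
    unfolding case_prod_beta by (simp only: measurable_lborel2) (rule triple_meas, measurable)
  have "emeasure (distr H_dist borel (\<lambda>p. 3/real n * (D p + 1/3))) A
      = emeasure H_dist ((\<lambda>p. 3/real n * (D p + 1/3)) -` A \<inter> space H_dist)"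
    by (rule emeasure_distr) (auto simp: H_dist_def)
  also have "\<dots> = (\<integral>\<^sup>+p. (\<lambda>(x, y, z). ennreal (h_dens x y z)) p * indicator ((\<lambda>p. 3/real n * (D p + 1/3)) -` A) p \<partial>lborel)"
  proof -
    have fm: "(\<lambda>p. 3/real n * (D p + 1/3)) \<in> borel_measurable borel" by measurable
    have pre: "(\<lambda>p. 3/real n * (D p + 1/3)) -` A \<in> sets borel"
      using measurable_sets[OF fm A] by simp
    show ?thesis unfolding H_dist_def by (subst emeasure_density) (use hm pre in auto)
  qed
  also have "\<dots> = (\<integral>\<^sup>+p. (case p of (x, y, z) \<Rightarrow> indicator A (3/real n*(D (x, y, z)+1/3)) * ennreal (h_dens x y z)) \<partial>lborel)"
    by (intro nn_integral_cong) (auto simp: indicator_def split: prod.splits)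
  also have "\<dots> = RG (\<lambda>u. indicator A (3/real n*(u+1/3)))"
    by (rule marg) measurable
  also have "\<dots> = emeasure (F2 n) A" using RG_F2[OF n A] .
  finally show "emeasure (distr H_dist borel (\<lambda>p. 3/real n * (D p + 1/3))) A = emeasure (F2 n) A" .
qed

lemma H_marg1: "n > 0 \<Longrightarrow> distr H_dist borel (\<lambda>p. 3/real n * ((\<lambda>(x,y,z). x - y) p + 1/3)) = F2 n"
  by (rule H_marg_gen) (auto simp: marg1 intro!: triple_meas_r)

lemma H_marg2: "n > 0 \<Longrightarrow> distr H_dist borel (\<lambda>p. 3/real n * ((\<lambda>(x,y,z). y - z) p + 1/3)) = F2 n"
  by (rule H_marg_gen) (auto simp: marg2 intro!: triple_meas_r)

lemma H_marg3: "n > 0 \<Longrightarrow> distr H_dist borel (\<lambda>p. 3/real n * ((\<lambda>(x,y,z). z - x) p + 1/3)) = F2 n"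
  by (rule H_marg_gen) (auto simp: marg3 intro!: triple_meas_r)

lemma F2_refl:
  assumes n: "n > 0"
  shows "distr (F2 n) borel (\<lambda>t. 2/real n - t) = F2 n"
proof (rule measure_eqI)
  show "sets (distr (F2 n) borel (\<lambda>t. 2/real n - t)) = sets (F2 n)" by (simp add: F2_def)
next
  fix A assume "A \<in> sets (distr (F2 n) borel (\<lambda>t. 2/real n - t))"
  then have A[measurable]: "A \<in> sets borel" by simp
  have fm: "(\<lambda>t. 2/real n - t) \<in> borel_measurable borel" by measurable
  have pre[measurable]: "(\<lambda>t. 2/real n - t) -` A \<in> sets borel"
    using measurable_sets[OF fm A] by simp
  have "emeasure (distr (F2 n) borel (\<lambda>t. 2/real n - t)) A = emeasure (F2 n) ((\<lambda>t. 2/real n - t) -` A)"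
    by (subst emeasure_distr) (auto simp: F2_def)
  also have "\<dots> = emeasure lborel ({0..2/real n} \<inter> (\<lambda>t. 2/real n - t) -` A) / emeasure lborel {0..2/real n}"
    unfolding F2_def by (subst emeasure_uniform_measure) auto
  also have "emeasure lborel ({0..2/real n} \<inter> (\<lambda>t. 2/real n - t) -` A) = emeasure lborel ({0..2/real n} \<inter> A)"
  proof -
    have "emeasure lborel ({0..2/real n} \<inter> (\<lambda>t. 2/real n - t) -` A)
        = (\<integral>\<^sup>+t. indicator ({0..2/real n} \<inter> (\<lambda>t. 2/real n - t) -` A) t \<partial>lborel)"
      by simp
    also have "\<dots> = (\<integral>\<^sup>+u. indicator ({0..2/real n} \<inter> (\<lambda>t. 2/real n - t) -` A) (2/real n + (-1) * u) \<partial>lborel)"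
      using nn_integral_real_affine[of "indicator ({0..2/real n} \<inter> (\<lambda>t. 2/real n - t) -` A)" "-1" "2/real n"]
      by simp
    also have "\<dots> = (\<integral>\<^sup>+u. indicator ({0..2/real n} \<inter> A) u \<partial>lborel)"
      by (intro nn_integral_cong) (auto simp: indicator_def)
    also have "\<dots> = emeasure lborel ({0..2/real n} \<inter> A)" by simp
    finally show ?thesis .
  qed
  also have "emeasure lborel ({0..2/real n} \<inter> A) / emeasure lborel {0..2/real n} = emeasure (F2 n) A"
    unfolding F2_def by (subst emeasure_uniform_measure) auto
  finally show "emeasure (distr (F2 n) borel (\<lambda>t. 2/real n - t)) A = emeasure (F2 n) A" .
qed

lemma sum_split:
  "(\<Sum>i=1..a+b. if i \<le> a then u else v) = real a * u + real b * (v::real)"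
proof -
  have "(\<Sum>i=1..a+b. if i \<le> a then u else v) = (\<Sum>i=1..a. if i \<le> a then u else v) + (\<Sum>i=a+1..a+b. if i \<le> a then u else v)"
    by (rule sum.ub_add_nat) simp
  also have "(\<Sum>i=1..a. if i \<le> a then u else v) = (\<Sum>i=1..a. u)" by (rule sum.cong) auto
  also have "(\<Sum>i=a+1..a+b. if i \<le> a then u else v) = (\<Sum>i=a+1..a+b. v)" by (rule sum.cong) auto
  finally show ?thesis by simp
qed

lemma bseq_even:
  assumes "even n" "n = 2 * m"
  shows "bseq n t p i = (if i \<le> m then t else 2/real n - t)"
  using assms by (cases p) (simp add: bseq_def Let_def)

lemma bseq_odd:
  assumes "n = 2 * k + 3"
  shows "bseq n t p i = (if i \<le> k then t else if i \<le> 2*k then 2/real n - t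
      else if i = 2*k+1 then 3/real n * ((\<lambda>(x,y,z). x - y) p + 1/3)
      else if i = 2*k+2 then 3/real n * ((\<lambda>(x,y,z). y - z) p + 1/3)
      else 3/real n * ((\<lambda>(x,y,z). z - x) p + 1/3))"
proof -
  have "n div 2 = k + 1" "odd n" using assms by auto
  then show ?thesis using assms by (cases p) (simp add: bseq_def Let_def)
qed

lemma bseq_sum:
  assumes "n \<ge> 2"
  shows "(\<Sum>i=1..n. bseq n t p i) = 1"
proof (cases "even n")
  case True
  then obtain m where m: "n = m + m" by (metis evenE mult_2)
  have "(\<Sum>i=1..n. bseq n t p i) = (\<Sum>i=1..m+m. if i \<le> m then t else 2/real n - t)"
    using bseq_even[OF True, of m] m by simp
  also have "\<dots> = real m * t + real m * (2/real n - t)" by (rule sum_split)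
  also have "\<dots> = 1" using m assms by (simp add: field_simps)
  finally show ?thesis .
next
  case False
  define k where "k = n div 2 - 1"
  have k: "n = 2 * k + 3" unfolding k_def using False assms by presburger
  obtain x y z where p: "p = (x, y, z)" by (cases p)
  define c where "c = 2/real n - t"
  have iv: "{1..n} = {1..Suc (Suc (Suc (k+k)))}" using k by simp
  have S: "(\<Sum>i=1..n. bseq n t p i) = (\<Sum>i=1..k+k. bseq n t p i) + bseq n t p (Suc (k+k)) + bseq n t p (Suc (Suc (k+k))) + bseq n t p (Suc (Suc (Suc (k+k))))"
    unfolding iv by (simp add: sum.cl_ivl_Suc)
  have S2: "(\<Sum>i=1..k+k. bseq n t p i) = (\<Sum>i=1..k+k. if i \<le> k then t else c)"
    by (rule sum.cong) (auto simp: bseq_odd[OF k] c_def)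
  have S3: "(\<Sum>i=1..k+k. if i \<le> k then t else c) = real k * t + real k * c" by (rule sum_split)
  have b1: "bseq n t p (Suc (k+k)) = 3/real n * (x - y + 1/3)" by (simp add: bseq_odd[OF k] p mult_2)
  have b2: "bseq n t p (Suc (Suc (k+k))) = 3/real n * (y - z + 1/3)" by (simp add: bseq_odd[OF k] p mult_2)
  have b3: "bseq n t p (Suc (Suc (Suc (k+k)))) = 3/real n * (z - x + 1/3)" by (simp add: bseq_odd[OF k] p mult_2)
  have fin: "real k * t + real k * c + 3/real n * (x - y + 1/3) + 3/real n * (y - z + 1/3)
      + 3/real n * (z - x + 1/3) = 1"
  proof -
    have rn: "real n = 2 * real k + 3" using k by simp
    have np: "real n > 0" using rn by simp
    have "real k * t + real k * c = real k * (2 / real n)" unfolding c_def by (simp add: algebra_simps)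
    moreover have "3/real n * (x - y + 1/3) + 3/real n * (y - z + 1/3) + 3/real n * (z - x + 1/3) = 3 / real n"
      using np by (simp add: field_simps)
    moreover have "real k * (2 / real n) + 3 / real n = 1" proof -
      have "real k * (2 / real n) + 3 / real n = (2 * real k + 3) / real n"
        using np by (simp add: field_simps)
      then show ?thesis using rn np by simp
    qed
    ultimately show ?thesis by (simp add: algebra_simps)
  qed
  show ?thesis unfolding S S2 S3 b1 b2 b3 using fin by simp
qed

lemma distr_comp_eq:
  assumes P: "P \<in> measurable M N" and f: "f \<in> measurable N borel"
    and D1: "distr M N P = H" and D2: "distr H borel f = K"
  shows "distr M borel (\<lambda>\<omega>. f (P \<omega>)) = K"
proof -
  have "distr M borel (\<lambda>\<omega>. f (P \<omega>)) = distr (distr M N P) borel f"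
    using distr_distr[OF f P] by (simp add: comp_def)
  then show ?thesis using D1 D2 by simp
qed

lemma gmeas1: "(\<lambda>p. 3/real n * ((\<lambda>(x,y,z). x - y) p + 1/3)) \<in> borel_measurable (borel :: (real \<times> real \<times> real) measure)"
  by (rule triple_meas_r) measurable
lemma gmeas2: "(\<lambda>p. 3/real n * ((\<lambda>(x,y,z). y - z) p + 1/3)) \<in> borel_measurable (borel :: (real \<times> real \<times> real) measure)"
  by (rule triple_meas_r) measurable
lemma gmeas3: "(\<lambda>p. 3/real n * ((\<lambda>(x,y,z). z - x) p + 1/3)) \<in> borel_measurable (borel :: (real \<times> real \<times> real) measure)"
  by (rule triple_meas_r) measurable

theorem lemma2p4:
  fixes M :: "'a measure" and n :: nat
    and T :: "'a \<Rightarrow> real" and P :: "'a \<Rightarrow> real \<times> real \<times> real"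
  assumes "prob_space M"
    and "n \<ge> 2"
    and "T \<in> borel_measurable M"
    and "distr M borel T = F2 n"
    and "odd n \<Longrightarrow> P \<in> borel_measurable M"
    and "odd n \<Longrightarrow> distr M borel P = H_dist"
    and "odd n \<Longrightarrow> distr M (borel \<Otimes>\<^sub>M borel) (\<lambda>\<omega>. (T \<omega>, P \<omega>)) = F2 n \<Otimes>\<^sub>M H_dist"
  shows "(\<forall>\<omega>\<in>space M. (\<Sum>i=1..n. bseq n (T \<omega>) (P \<omega>) i) = 1) \<and>
         (\<forall>i\<in>{1..n}. distr M borel (\<lambda>\<omega>. bseq n (T \<omega>) (P \<omega>) i) = F2 n)"
proof -
  have n0: "n > 0" using assms(2) by simp
  have DT: "distr M borel (\<lambda>\<omega>. T \<omega>) = F2 n" using assms(4) by simp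
  have DR: "distr M borel (\<lambda>\<omega>. 2/real n - T \<omega>) = F2 n"
    by (rule distr_comp_eq[OF assms(3) _ assms(4) F2_refl[OF n0]]) measurable
  show ?thesis
  proof (intro conjI ballI)
    fix \<omega> show "(\<Sum>i=1..n. bseq n (T \<omega>) (P \<omega>) i) = 1" by (rule bseq_sum[OF assms(2)])
  next
    fix i assume i: "i \<in> {1..n}"
    show "distr M borel (\<lambda>\<omega>. bseq n (T \<omega>) (P \<omega>) i) = F2 n"
    proof (cases "even n")
      case True
      define m where "m = n div 2"
      have m: "n = 2 * m" using True unfolding m_def by simp
      show ?thesis
      proof (cases "i \<le> m")
        case True
        then have "(\<lambda>\<omega>. bseq n (T \<omega>) (P \<omega>) i) = (\<lambda>\<omega>. T \<omega>)"
          using bseq_even[OF \<open>even n\<close> m] by simp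
        then show ?thesis using DT by simp
      next
        case False
        then have "(\<lambda>\<omega>. bseq n (T \<omega>) (P \<omega>) i) = (\<lambda>\<omega>. 2/real n - T \<omega>)"
          using bseq_even[OF \<open>even n\<close> m] by simp
        then show ?thesis using DR by simp
      qed
    next
      case False
      define k where "k = n div 2 - 1"
      have k: "n = 2 * k + 3" unfolding k_def using False assms(2) by presburger
      have Pm: "P \<in> borel_measurable M" using assms(5) False by simp
      have DP: "distr M borel P = H_dist" using assms(6) False by simp
      consider "i \<le> k" | "\<not> i \<le> k" "i \<le> 2*k" | "i = 2*k+1" | "i = 2*k+2" | "i = 2*k+3"
        using i k by atomize_elim presburger
      then show ?thesis
      proof cases
        case 1
        then have "(\<lambda>\<omega>. bseq n (T \<omega>) (P \<omega>) i) = (\<lambda>\<omega>. T \<omega>)"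
          using bseq_odd[OF k] by simp
        then show ?thesis using DT by simp
      next
        case 2
        then have "(\<lambda>\<omega>. bseq n (T \<omega>) (P \<omega>) i) = (\<lambda>\<omega>. 2/real n - T \<omega>)"
          using bseq_odd[OF k] by simp
        then show ?thesis using DR by simp
      next
        case 3
        then have "(\<lambda>\<omega>. bseq n (T \<omega>) (P \<omega>) i) = (\<lambda>\<omega>. 3/real n * ((\<lambda>(x,y,z). x - y) (P \<omega>) + 1/3))"
          using bseq_odd[OF k] by simp
        then show ?thesis using distr_comp_eq[OF Pm gmeas1 DP H_marg1[OF n0]] by simp
      next
        case 4
        then have "(\<lambda>\<omega>. bseq n (T \<omega>) (P \<omega>) i) = (\<lambda>\<omega>. 3/real n * ((\<lambda>(x,y,z). y - z) (P \<omega>) + 1/3))"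
          using bseq_odd[OF k] by simp
        then show ?thesis using distr_comp_eq[OF Pm gmeas2 DP H_marg2[OF n0]] by simp
      next
        case 5
        then have "(\<lambda>\<omega>. bseq n (T \<omega>) (P \<omega>) i) = (\<lambda>\<omega>. 3/real n * ((\<lambda>(x,y,z). z - x) (P \<omega>) + 1/3))"
          using bseq_odd[OF k] by simp
        then show ?thesis using distr_comp_eq[OF Pm gmeas3 DP H_marg3[OF n0]] by simp
      qed
    qed
  qed
qed


end
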